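(* Let $T\ge2$, and let $\mathscr Q^{\mathrm{VC}}$ be the mixture probability assignment built from $g_1,\dots,g_{m_\epsilon}\in\mathcal G$. For every $x_{1:T}\in\mathcal X^T$, $y_{1:T}\in\{0,1\}^T$, $g^*\in\mathcal G$ and $\theta_0^*,\theta_1^*\in[0,1]$, $$\log\frac{p_{g^*,\theta_0^*,\theta_1^*}(y_{1:T}\mid x_{1:T})}{q(y_{1:T}\|x_{1:T})}\le\log m_\epsilon+2\log T+32\,\min_{i\in[m_\epsilon]}d_H\big(g^*(x_{1:T}),g_i(x_{1:T})\big)\log T,$$ where $g(x_{1:T})=(g(x_1),\dots,g(x_T))\in\{0,1\}^T$ and $d_H$ is Hamming distance.
   Context: $\mathcal G\subseteq\{\mathcal X\to\{0,1\}\}$ is a class of binary functions. The VC class $\mathcal F^{\mathrm{VC}}$ consists of the predictors indexed by $(g,\theta_0,\theta_1)\in\mathcal G\times[0,1]^2$ with $p_{g,\theta_0,\theta_1}(1\mid x)=\theta_{g(x)}$, $p_{g,\theta_0,\theta_1}(0\mid x)=1-\theta_{g(x)}$, and $p_{g,\theta_0,\theta_1}(y_{1:t}\mid x_{1:t})=\prod_{i\le t}p_{g,\theta_0,\theta_1}(y_i\mid x_i)$. Given $g_1,\dots,g_{m_\epsilon}\in\mathcal G$, the mixture assignment $\mathscr Q^{\mathrm{VC}}$ is defined by $q(y_{1:t}\|x_{1:t})=\frac1{m_\epsilon}\sum_{i=1}^{m_\epsilon}\int_0^1\int_0^1p_{g_i,\theta_0,\theta_1}(y_{1:t}\mid x_{1:t})\,d\theta_0\,d\theta_1$,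 with sequential predictions $q(1\mid x_{1:t},y_{1:t-1})=q(y_{1:t-1}1\|x_{1:t})/q(y_{1:t-1}\|x_{1:t-1})$, so that $q(y_{1:T}\|x_{1:T})=\prod_t q(y_t\mid x_{1:t},y_{1:t-1})$. Logarithms are natural. *)

theory Defs
  imports "HOL-Analysis.Analysis"
begin

text \<open>Binary functions X -> {0,1} are modelled as 'x => bool (True = 1, False = 0).
  Sequences x_{1:T}, y_{1:T} are modelled as functions on nat, using indices 0..T-1.\<close>

definition theta_sel :: "bool \<Rightarrow> real \<Rightarrow> real \<Rightarrow> real" where
  "theta_sel b th0 th1 = (if b then th1 else th0)"

definition pVC :: "('x \<Rightarrow> bool) \<Rightarrow> real \<Rightarrow> real \<Rightarrow> nat \<Rightarrow> (nat \<Rightarrow> 'x) \<Rightarrow> (nat \<Rightarrow> bool) \<Rightarrow> real" where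
  "pVC g th0 th1 T x y =
     (\<Prod>t<T. if y t then theta_sel (g (x t)) th0 th1 else 1 - theta_sel (g (x t)) th0 th1)"

definition qVC :: "nat \<Rightarrow> (nat \<Rightarrow> ('x \<Rightarrow> bool)) \<Rightarrow> nat \<Rightarrow> (nat \<Rightarrow> 'x) \<Rightarrow> (nat \<Rightarrow> bool) \<Rightarrow> real" where
  "qVC m gs T x y =
     (1 / real m) * (\<Sum>i<m. integral {0..1} (\<lambda>th0. integral {0..1} (\<lambda>th1. pVC (gs i) th0 th1 T x y)))"

definition hamming_on :: "nat \<Rightarrow> (nat \<Rightarrow> 'x) \<Rightarrow> ('x \<Rightarrow> bool) \<Rightarrow> ('x \<Rightarrow> bool) \<Rightarrow> nat" where
  "hamming_on T x g h = card {t \<in> {..<T}. g (x t) \<noteq> h (x t)}"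

end

theory Submission
  imports Defs
begin


lemma deriv_aux: "((\<lambda>s::real. s^Suc a / real (Suc a)) has_real_derivative z^a) (at z within S)"
proof -
  have "((\<lambda>s::real. s^Suc a / real (Suc a)) has_real_derivative (real (Suc a) * z^a) / real (Suc a)) (at z within S)"
    by (intro DERIV_cdivide) (use DERIV_pow[of "Suc a" z S] in simp)
  then show ?thesis by simp
qed

lemma alg_aux:
  fixes A B F :: real assumes "F > 0"
  shows "A*B/F - (real (Suc a)*A)*B/(real (a+b+2)*F) = A*(real (Suc b)*B)/(real (a+b+2)*F)"
proof -
  have D: "real (a+b+2) > 0" by simp
  have "A*B/F = A*B*real (a+b+2)/(real (a+b+2)*F)" using D assms by simp
  then have "A*B/F - (real (Suc a)*A)*B/(real (a+b+2)*F) = (A*B*real (a+b+2) - (real (Suc a)*A)*B)/(real (a+b+2)*F)"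
    by (simp add: diff_divide_distrib)
  also have "A*B*real (a+b+2) - (real (Suc a)*A)*B = A*(real (Suc b)*B)" by (simp add: algebra_simps)
  finally show ?thesis .
qed

lemma int_pow01: "((\<lambda>s::real. s^a) has_integral (1 / real (Suc a))) {0..1}"
proof -
  have "((\<lambda>s::real. s^a) has_integral ((\<lambda>s. s^Suc a / real (Suc a)) 1 - (\<lambda>s. s^Suc a / real (Suc a)) 0)) {0..1}"
    apply (rule fundamental_theorem_of_calculus)
     apply simp
    unfolding has_real_derivative_iff_has_vector_derivative[symmetric]
    using deriv_aux by blast
  then show ?thesis by simp
qed

lemma beta_int: "integral {0..1} (\<lambda>s::real. s^a * (1-s)^b) = fact a * fact b / fact (a+b+1)"
proof (induction b arbitrary: a)
  case 0
  have "integral {0..1} (\<lambda>s::real. s^a) = 1 / real (Suc a)"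
    using int_pow01 by (rule integral_unique)
  moreover have "fact (a+0+1) = real (Suc a) * (fact a::real)" by simp
  ultimately show ?case by simp
next
  case (Suc b)
  have eq: "(\<lambda>s::real. s^a * (1-s)^Suc b) = (\<lambda>s. s^a * (1-s)^b - s^Suc a * (1-s)^b)"
    by (rule ext) (simp add: algebra_simps)
  have i1: "(\<lambda>s::real. s^a * (1-s)^b) integrable_on {0..1}"
    by (intro integrable_continuous_real continuous_intros)
  have i2: "(\<lambda>s::real. s^Suc a * (1-s)^b) integrable_on {0..1}"
    by (intro integrable_continuous_real continuous_intros)
  have "integral {0..1} (\<lambda>s::real. s^a * (1-s)^Suc b)
      = fact a * fact b / fact (a+b+1) - fact (Suc a) * fact b / fact (Suc a+b+1)"
    unfolding eq integral_diff[OF i1 i2] Suc.IH ..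
  also have "\<dots> = fact a * fact (Suc b) / fact (a + Suc b + 1)"
  proof -
    have f1: "(fact (Suc a + b + 1)::real) = real (a+b+2) * fact (a+b+1)"
      by (simp add: fact_Suc)
    have f2: "(fact (a + Suc b + 1)::real) = real (a+b+2) * fact (a+b+1)"
      by (simp add: fact_Suc)
    have pos: "(fact (a+b+1)::real) > 0" by simp
    have f3: "(fact (Suc a)::real) = real (Suc a) * fact a" "(fact (Suc b)::real) = real (Suc b) * fact b"
      by simp_all
    show ?thesis unfolding f1 f2 f3 using alg_aux[OF pos, of "fact a" "fact b" a b] by simp
  qed
  finally show ?case .
qed



lemma binom_bound:
  fixes th :: real assumes "0 \<le> th" "th \<le> 1"
  shows "real ((a+b) choose a) * th^a * (1-th)^b \<le> 1"
proof -
  have "(1::real) = (th + (1 - th))^(a+b)" by simp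
  also have "\<dots> = (\<Sum>k\<le>a+b. real ((a+b) choose k) * th^k * (1-th)^(a+b-k))"
    by (rule binomial_ring)
  finally have e: "(1::real) = (\<Sum>k\<le>a+b. real ((a+b) choose k) * th^k * (1-th)^(a+b-k))" .
  have "real ((a+b) choose a) * th^a * (1-th)^(a+b-a) \<le> (\<Sum>k\<le>a+b. real ((a+b) choose k) * th^k * (1-th)^(a+b-k))"
    by (rule member_le_sum) (use assms in auto)
  then show ?thesis using e by simp
qed

lemma laplace_bound:
  fixes th :: real assumes "0 \<le> th" "th \<le> 1"
  shows "th^a * (1-th)^b \<le> real (a+b+1) * integral {0..1} (\<lambda>s::real. s^a * (1-s)^b)"
proof -
  have bf: "fact a * fact b * ((a+b) choose a) = fact (a+b)"
    using binomial_fact_lemma[of a "a+b"] by simp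
  have "real (a+b+1) * integral {0..1} (\<lambda>s::real. s^a * (1-s)^b)
      = real (a+b+1) * (fact a * fact b / fact (a+b+1))" by (simp add: beta_int)
  also have "\<dots> = 1 / real ((a+b) choose a)"
  proof -
    have "(fact (a+b+1)::real) = real (a+b+1) * (fact a * fact b * real ((a+b) choose a))"
      using bf by (metis fact_Suc of_nat_fact of_nat_mult Suc_eq_plus1)
    moreover have "real ((a+b) choose a) > 0" by simp
    moreover have "\<And>u v w z::real. u > 0 \<Longrightarrow> v > 0 \<Longrightarrow> w > 0 \<Longrightarrow> z > 0 \<Longrightarrow> z * (u * v / (z * (u * v * w))) = 1 / w"
      by (simp add: field_simps)
    ultimately show ?thesis by simp
  qed
  finally have e: "real (a+b+1) * integral {0..1} (\<lambda>s::real. s^a * (1-s)^b) = 1 / real ((a+b) choose a)" .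
  have c: "real ((a+b) choose a) > 0" by simp
  have "real ((a+b) choose a) * (th^a * (1-th)^b) \<le> 1"
    using binom_bound[OF assms, of a b] by (simp add: mult.assoc)
  then show ?thesis unfolding e using c by (simp add: field_simps)
qed

lemma beta_pos: "integral {0..1} (\<lambda>s::real. s^a * (1-s)^b) > 0"
  by (simp add: beta_int)

definition cnt :: "nat \<Rightarrow> (nat \<Rightarrow> 'x) \<Rightarrow> (nat \<Rightarrow> bool) \<Rightarrow> ('x \<Rightarrow> bool) \<Rightarrow> bool \<Rightarrow> bool \<Rightarrow> nat" where
  "cnt T x y g b c = card {t\<in>{..<T}. g (x t) = b \<and> y t = c}"

lemma pVC_form:
  "pVC g th0 th1 T x y = (th0^cnt T x y g False True * (1-th0)^cnt T x y g False False)
     * (th1^cnt T x y g True True * (1-th1)^cnt T x y g True False)"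
proof -
  have "pVC g th0 th1 T x y = (\<Prod>t<T. if y t then (if g (x t) then th1 else th0) else (if g (x t) then 1-th1 else 1-th0))"
    unfolding pVC_def theta_sel_def by (intro prod.cong) auto
  also have "\<dots> = (\<Prod>t\<in>{..<T} \<inter> {t. y t} \<inter> {t. g (x t)}. th1) * (\<Prod>t\<in>{..<T} \<inter> {t. y t} \<inter> - {t. g (x t)}. th0)
     * ((\<Prod>t\<in>{..<T} \<inter> - {t. y t} \<inter> {t. g (x t)}. 1-th1) * (\<Prod>t\<in>{..<T} \<inter> - {t. y t} \<inter> - {t. g (x t)}. 1-th0))"
    by (simp add: prod.If_cases)
  also have "\<dots> = th1^cnt T x y g True True * th0^cnt T x y g False True * ((1-th1)^cnt T x y g True False * (1-th0)^cnt T x y g False False)"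
    unfolding cnt_def prod_constant by (intro arg_cong2[where f="(*)"] arg_cong2[where f="(^)"] arg_cong[where f=card] refl) auto
  finally show ?thesis by (simp add: ac_simps)
qed

lemma card_split: "finite A \<Longrightarrow> card {t\<in>A. P t} + card {t\<in>A. \<not> P t} = card A"
proof -
  assume f: "finite A"
  have "card ({t\<in>A. P t} \<union> {t\<in>A. \<not> P t}) = card {t\<in>A. P t} + card {t\<in>A. \<not> P t}"
    by (rule card_Un_disjoint) (use f in auto)
  moreover have "{t\<in>A. P t} \<union> {t\<in>A. \<not> P t} = A" by auto
  ultimately show ?thesis by simp
qed

lemma cnt_sum: "(cnt T x y g False True + cnt T x y g False False) + (cnt T x y g True True + cnt T x y g True False) = T"
proof -
  have h: "cnt T x y g b True + cnt T x y g b False = card {t\<in>{..<T}. g (x t) = b}" for b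
  proof -
    have "card {t\<in>{t\<in>{..<T}. g (x t) = b}. y t} + card {t\<in>{t\<in>{..<T}. g (x t) = b}. \<not> y t} = card {t\<in>{..<T}. g (x t) = b}"
      by (rule card_split) simp
    moreover have "{t\<in>{t\<in>{..<T}. g (x t) = b}. y t} = {t\<in>{..<T}. g (x t) = b \<and> y t = True}" by auto
    moreover have "{t\<in>{t\<in>{..<T}. g (x t) = b}. \<not> y t} = {t\<in>{..<T}. g (x t) = b \<and> y t = False}" by auto
    ultimately show ?thesis unfolding cnt_def by simp
  qed
  have "card {t\<in>{..<T}. g (x t)} + card {t\<in>{..<T}. \<not> g (x t)} = card {..<T::nat}"
    by (rule card_split) simp
  then show ?thesis using h[of True] h[of False] by simp
qed

definition Bt :: "nat \<Rightarrow> nat \<Rightarrow> real" where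
  "Bt a b = integral {0..1} (\<lambda>s::real. s^a * (1-s)^b)"

lemma J_form:
  "integral {0..1} (\<lambda>th0. integral {0..1} (\<lambda>th1. pVC g th0 th1 T x y))
    = Bt (cnt T x y g False True) (cnt T x y g False False) * Bt (cnt T x y g True True) (cnt T x y g True False)"
  unfolding pVC_form Bt_def by simp



lemma sq_bound:
  fixes n0 n1 T :: nat assumes "n0 + n1 = T" "T \<ge> 2"
  shows "real (n0+1) * real (n1+1) \<le> real T ^ 2"
proof -
  have "4 * (real n0 + 1) * (real n1 + 1) \<le> (real n0 + real n1 + 2)^2"
    using sum_squares_ge_zero[of "real n0 - real n1" 0] by (simp add: power2_eq_square algebra_simps)
  also have "\<dots> = (real T + 2)^2" using assms(1) by simp
  also have "\<dots> \<le> (2 * real T)^2" using assms(2) by (intro power_mono) auto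
  finally show ?thesis by (simp add: power2_eq_square algebra_simps)
qed

lemma J_lower:
  assumes "T \<ge> 2" "0 \<le> th0" "th0 \<le> 1" "0 \<le> th1" "th1 \<le> 1"
  shows "pVC g th0 th1 T x y \<le> real T ^ 2 * integral {0..1} (\<lambda>th0. integral {0..1} (\<lambda>th1. pVC g th0 th1 T x y))"
proof -
  define a0 where "a0 = cnt T x y g False True"
  define b0 where "b0 = cnt T x y g False False"
  define a1 where "a1 = cnt T x y g True True"
  define b1 where "b1 = cnt T x y g True False"
  have P0: "th0^a0 * (1-th0)^b0 \<le> real (a0+b0+1) * Bt a0 b0"
    unfolding Bt_def by (rule laplace_bound) (use assms in auto)
  have P1: "th1^a1 * (1-th1)^b1 \<le> real (a1+b1+1) * Bt a1 b1"
    unfolding Bt_def by (rule laplace_bound) (use assms in auto)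
  have n0: "th0^a0 * (1-th0)^b0 \<ge> 0" using assms by simp
  have n1: "th1^a1 * (1-th1)^b1 \<ge> 0" using assms by simp
  have "pVC g th0 th1 T x y = (th0^a0 * (1-th0)^b0) * (th1^a1 * (1-th1)^b1)"
    unfolding pVC_form a0_def b0_def a1_def b1_def ..
  also have "\<dots> \<le> (real (a0+b0+1) * Bt a0 b0) * (real (a1+b1+1) * Bt a1 b1)"
    by (rule mult_mono[OF P0 P1 _ n1]) (use P0 n0 in linarith)
  also have "\<dots> = (real (a0+b0+1) * real (a1+b1+1)) * (Bt a0 b0 * Bt a1 b1)" by simp
  also have "\<dots> \<le> real T ^ 2 * (Bt a0 b0 * Bt a1 b1)"
  proof (rule mult_right_mono)
    show "real (a0+b0+1) * real (a1+b1+1) \<le> real T ^ 2"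
      by (rule sq_bound) (use cnt_sum[of T x y g] assms in \<open>auto simp: a0_def b0_def a1_def b1_def\<close>)
    show "0 \<le> Bt a0 b0 * Bt a1 b1" using beta_pos unfolding Bt_def
      by (simp add: less_imp_le)
  qed
  finally show ?thesis unfolding J_form a0_def b0_def a1_def b1_def .
qed

lemma J_pos: "integral {0..1} (\<lambda>th0. integral {0..1} (\<lambda>th1. pVC g th0 th1 T x y)) > 0"
  unfolding J_form Bt_def using beta_pos by simp

lemma smooth_facts:
  fixes u e :: real assumes "0 \<le> u" "u \<le> 1" "0 \<le> e" "e \<le> 1"
  shows "(1-e)*u \<le> (1-e)*u + e/2" "e/2 \<le> (1-e)*u + e/2"
    "(1-e)*(1-u) \<le> 1 - ((1-e)*u + e/2)" "e/2 \<le> 1 - ((1-e)*u + e/2)"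
    "0 \<le> (1-e)*u + e/2" "(1-e)*u + e/2 \<le> 1"
proof -
  have h1: "0 \<le> (1-e)*(1-u)" using assms by simp
  have h2: "0 \<le> e*u" using assms by simp
  have h3: "e*u \<le> u" using assms mult_right_mono[of e 1 u] by simp
  show "(1-e)*u \<le> (1-e)*u + e/2" "e/2 \<le> (1-e)*u + e/2"
    "(1-e)*(1-u) \<le> 1 - ((1-e)*u + e/2)" "e/2 \<le> 1 - ((1-e)*u + e/2)"
    "0 \<le> (1-e)*u + e/2" "(1-e)*u + e/2 \<le> 1"
    using h1 h2 h3 assms by (simp_all add: algebra_simps)
qed

lemma smooth:
  assumes T: "T \<ge> 2" and "0 \<le> th0" "th0 \<le> 1" "0 \<le> th1" "th1 \<le> 1"
  defines "e \<equiv> 1 / real T ^ 2"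
  shows "pVC gstar th0 th1 T x y \<le> 2 * (2 * real T ^ 2) ^ hamming_on T x gstar g
           * pVC g ((1-e)*th0 + e/2) ((1-e)*th1 + e/2) T x y"
proof -
  define d where "d = hamming_on T x gstar g"
  define fs where "fs t = (if y t then theta_sel (gstar (x t)) th0 th1 else 1 - theta_sel (gstar (x t)) th0 th1)" for t
  define f' where "f' t = (if y t then theta_sel (g (x t)) ((1-e)*th0 + e/2) ((1-e)*th1 + e/2)
        else 1 - theta_sel (g (x t)) ((1-e)*th0 + e/2) ((1-e)*th1 + e/2))" for t
  define c where "c t = (if gstar (x t) = g (x t) then 1 - e else e/2)" for t
  have Tpos: "real T \<ge> 2" using T by simp
  have TT: "1 \<le> real T ^ 2" using Tpos by (intro one_le_power) simp
  have e0: "0 \<le> e" unfolding e_def by simp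
  have e1: "e \<le> 1" unfolding e_def using TT by (simp add: divide_le_eq)
  note sf0 = smooth_facts[OF assms(2,3) e0 e1]
  note sf1 = smooth_facts[OF assms(4,5) e0 e1]
  have fs01: "0 \<le> fs t \<and> fs t \<le> 1" for t
    unfolding fs_def theta_sel_def using assms(2-5) by auto
  have key: "0 \<le> c t * fs t \<and> c t * fs t \<le> f' t" for t
  proof
    show "0 \<le> c t * fs t" unfolding c_def using fs01[of t] e0 e1 by auto
    show "c t * fs t \<le> f' t"
    proof (cases "gstar (x t) = g (x t)")
      case True
      then show ?thesis unfolding c_def fs_def f'_def theta_sel_def using sf0 sf1 by auto
    next
      case False
      have "c t * fs t \<le> e/2" unfolding c_def using False fs01[of t] e0
        by (simp add: mult_left_le)
      also have "e/2 \<le> f' t" unfolding f'_def theta_sel_def using sf0 sf1 by auto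
      finally show ?thesis .
    qed
  qed
  have "(\<Prod>t<T. c t * fs t) \<le> (\<Prod>t<T. f' t)"
    by (rule prod_mono) (use key in blast)
  then have A: "(\<Prod>t<T. c t) * (\<Prod>t<T. fs t) \<le> (\<Prod>t<T. f' t)"
    by (simp add: prod.distrib)
  define k where "k = card ({..<T} \<inter> {t. gstar (x t) = g (x t)})"
  have cprod: "(\<Prod>t<T. c t) = (1-e)^k * (e/2)^d"
  proof -
    have "(\<Prod>t<T. c t) = (\<Prod>t\<in>{..<T} \<inter> {t. gstar (x t) = g (x t)}. 1-e) * (\<Prod>t\<in>{..<T} \<inter> - {t. gstar (x t) = g (x t)}. e/2)"
      unfolding c_def by (simp add: prod.If_cases)
    also have "\<dots> = (1-e)^k * (e/2)^d"
      unfolding prod_constant k_def d_def hamming_on_def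
      by (intro arg_cong2[where f="(*)"] arg_cong2[where f="(^)"] arg_cong[where f=card] refl) auto
    finally show ?thesis .
  qed
  have "k \<le> card {..<T}" unfolding k_def by (rule card_mono) auto
  then have kT: "k \<le> T" by simp
  have "1/2 \<le> 1 - real T * e" unfolding e_def using Tpos by (simp add: power2_eq_square field_simps)
  also have "1 - real T * e = 1 + real T * (-e)" by simp
  also have "\<dots> \<le> (1 + (-e))^T" by (rule Bernoulli_inequality) (use e1 in simp)
  also have "\<dots> = (1-e)^T" by simp
  also have "\<dots> \<le> (1-e)^k" by (rule power_decreasing) (use kT e0 e1 in auto)
  finally have half: "1/2 \<le> (1-e)^k" .
  have ps0: "0 \<le> (\<Prod>t<T. fs t)" using fs01 by (simp add: prod_nonneg)
  have ed: "0 \<le> (e/2)^d" using e0 by simp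
  have "(1/2) * (e/2)^d * (\<Prod>t<T. fs t) \<le> (1-e)^k * (e/2)^d * (\<Prod>t<T. fs t)"
    by (intro mult_right_mono half ed ps0)
  also have "\<dots> \<le> (\<Prod>t<T. f' t)" using A cprod by simp
  finally have B: "(1/2) * (e/2)^d * (\<Prod>t<T. fs t) \<le> (\<Prod>t<T. f' t)" .
  have inv: "(2 * real T ^ 2)^d * (e/2)^d = 1"
    unfolding e_def power_mult_distrib[symmetric] using Tpos by simp
  have "(\<Prod>t<T. fs t) = 2 * (2 * real T ^ 2)^d * ((1/2) * (e/2)^d * (\<Prod>t<T. fs t))"
    using inv by (simp add: algebra_simps)
  also have "\<dots> \<le> 2 * (2 * real T ^ 2)^d * (\<Prod>t<T. f' t)"
    by (rule mult_left_mono[OF B]) simp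
  finally show ?thesis unfolding pVC_def fs_def f'_def d_def .
qed



lemma K_bound:
  assumes "T \<ge> 2" "d \<ge> 1"
  shows "2 * (2 * real T ^ 2) ^ d \<le> real T ^ (32 * d)"
proof -
  have Tp: "real T \<ge> 2" using assms by simp
  have "2 * (2 * real T ^ 2) ^ d = 2 ^ Suc d * real T ^ (2*d)"
    by (simp add: power_mult_distrib power_mult[symmetric] mult.commute)
  also have "\<dots> \<le> 2 ^ (2*d) * real T ^ (2*d)"
    by (intro mult_right_mono power_increasing) (use assms in auto)
  also have "\<dots> \<le> real T ^ (2*d) * real T ^ (2*d)"
    by (intro mult_right_mono power_mono) (use Tp in auto)
  also have "\<dots> = real T ^ (4*d)" by (simp add: power_add[symmetric])
  also have "\<dots> \<le> real T ^ (32*d)"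
    by (intro power_increasing) (use Tp in auto)
  finally show ?thesis .
qed

theorem mainTheorem10:
  fixes G :: "('x \<Rightarrow> bool) set" and gs :: "nat \<Rightarrow> ('x \<Rightarrow> bool)" and m T :: nat
    and x :: "nat \<Rightarrow> 'x" and y :: "nat \<Rightarrow> bool" and gstar :: "'x \<Rightarrow> bool"
    and th0 th1 :: real
  assumes "T \<ge> 2" and "m \<ge> 1" and "\<forall>i<m. gs i \<in> G" and "gstar \<in> G"
    and "th0 \<in> {0..1}" and "th1 \<in> {0..1}"
  shows "ln (pVC gstar th0 th1 T x y / qVC m gs T x y)
           \<le> ln (real m) + 2 * ln (real T)
              + 32 * real (Min ((\<lambda>i. hamming_on T x gstar (gs i)) ` {..<m})) * ln (real T)"
proof -
  have T2: "T \<ge> 2" and t0: "0 \<le> th0" "th0 \<le> 1" and t1: "0 \<le> th1" "th1 \<le> 1"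
    using assms by auto
  have Tp: "real T \<ge> 2" using T2 by simp
  define h where "h i = hamming_on T x gstar (gs i)" for i
  define d where "d = Min (h ` {..<m})"
  have "d \<in> h ` {..<m}" unfolding d_def by (rule Min_in) (use assms(2) in \<open>auto simp: lessThan_empty_iff\<close>)
  then obtain i0 where i0: "i0 < m" "h i0 = d" by auto
  define g where "g = gs i0"
  define J where "J j = integral {0..1} (\<lambda>th0. integral {0..1} (\<lambda>th1. pVC (gs j) th0 th1 T x y))" for j
  have Jpos: "J j > 0" for j unfolding J_def by (rule J_pos)
  have q: "qVC m gs T x y = (1 / real m) * (\<Sum>j<m. J j)" unfolding qVC_def J_def ..
  have "J i0 \<le> (\<Sum>j<m. J j)" by (rule member_le_sum) (use i0 Jpos less_imp_le in auto)
  then have "J i0 / real m \<le> (\<Sum>j<m. J j) / real m" by (rule divide_right_mono) simp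
  then have qlow: "J i0 / real m \<le> qVC m gs T x y" unfolding q by simp
  have qpos: "qVC m gs T x y > 0" using qlow Jpos[of i0] assms(2)
    by (smt (verit) divide_pos_pos of_nat_0_less_iff less_le_trans One_nat_def le_simps(3))
  define p where "p = pVC gstar th0 th1 T x y"
  have p0: "p \<ge> 0" unfolding p_def pVC_def theta_sel_def using t0 t1
    by (intro prod_nonneg) auto
  have pbound: "p \<le> real T ^ (32 * d) * (real T ^ 2 * J i0)"
  proof (cases "d = 0")
    case True
    have "finite {t\<in>{..<T}. gstar (x t) \<noteq> g (x t)}" by simp
    moreover have "card {t\<in>{..<T}. gstar (x t) \<noteq> g (x t)} = 0"
      using True i0 unfolding h_def hamming_on_def g_def by simp
    ultimately have "{t\<in>{..<T}. gstar (x t) \<noteq> g (x t)} = {}" by simp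
    then have agree: "\<forall>t<T. gstar (x t) = g (x t)" by auto
    have "p = pVC g th0 th1 T x y" unfolding p_def pVC_def
      by (rule prod.cong) (use agree in auto)
    also have "\<dots> \<le> real T ^ 2 * J i0" unfolding J_def g_def
      by (rule J_lower) (use T2 t0 t1 in auto)
    finally show ?thesis using True by simp
  next
    case False
    define e where "e = 1 / real T ^ 2"
    have TT: "1 \<le> real T ^ 2" using Tp by (intro one_le_power) simp
    have e0: "0 \<le> e" unfolding e_def by simp
    have e1: "e \<le> 1" unfolding e_def using TT by (simp add: divide_le_eq)
    note sf0 = smooth_facts[OF t0 e0 e1]
    note sf1 = smooth_facts[OF t1 e0 e1]
    have "p \<le> 2 * (2 * real T ^ 2) ^ d * pVC g ((1-e)*th0 + e/2) ((1-e)*th1 + e/2) T x y"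
      unfolding p_def e_def using smooth[OF T2 t0 t1, where x=x and y=y and gstar=gstar and g=g] i0 unfolding h_def g_def by simp
    also have "\<dots> \<le> 2 * (2 * real T ^ 2) ^ d * (real T ^ 2 * J i0)"
      by (rule mult_left_mono) (unfold J_def g_def, rule J_lower, use T2 sf0 sf1 in auto)
    also have "\<dots> \<le> real T ^ (32 * d) * (real T ^ 2 * J i0)"
      by (rule mult_right_mono[OF K_bound]) (use T2 False Jpos[of i0] in auto)
    finally show ?thesis .
  qed
  have RHS0: "0 \<le> ln (real m) + 2 * ln (real T) + 32 * real d * ln (real T)"
    using assms(2) Tp by simp
  show ?thesis
  proof (cases "p = 0")
    case True
    then show ?thesis using RHS0 unfolding p_def h_def d_def by simp
  next
    case False
    then have pp: "p > 0" using p0 by simp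
    have "p \<le> (real m * real T ^ 2 * real T ^ (32 * d)) * qVC m gs T x y"
    proof -
      have "p \<le> real T ^ (32 * d) * real T ^ 2 * J i0" using pbound by (simp add: mult.assoc)
      also have "\<dots> = real T ^ (32 * d) * real T ^ 2 * real m * (J i0 / real m)"
        using assms(2) by simp
      also have "\<dots> \<le> real T ^ (32 * d) * real T ^ 2 * real m * qVC m gs T x y"
        by (rule mult_left_mono[OF qlow]) simp
      finally show ?thesis by (simp add: ac_simps)
    qed
    then have le: "p / qVC m gs T x y \<le> real m * real T ^ 2 * real T ^ (32 * d)"
      using qpos by (simp add: pos_divide_le_eq)
    have "ln (p / qVC m gs T x y) \<le> ln (real m * real T ^ 2 * real T ^ (32 * d))"
      by (rule ln_mono[OF le]) (use pp qpos in simp)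
    also have "\<dots> = ln (real m) + 2 * ln (real T) + 32 * real d * ln (real T)"
      using assms(2) Tp by (simp add: ln_mult ln_realpow)
    finally show ?thesis unfolding p_def h_def d_def .
  qed
qed


end
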